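(* Let $R$ be a commutative Noetherian ring with unity such that $\Gamma_E(R)$ has more than three vertices. Then no associated prime of $R$ is a leaf of $\Gamma_E(R)$; that is, if $y\in R$ and $\operatorname{ann}(y)$ is a prime ideal, then $\deg[y]\neq 1$.
   Context: For $x,y\in R$ write $x\sim y$ iff $\operatorname{ann}(x)=\operatorname{ann}(y)$; $[x]$ denotes the equivalence class of $x$. Let $Z^*(R)$ be the set of nonzero zero divisors of $R$. The graph $\Gamma_E(R)$ is the simple graph whose vertices are the classes $[x]$ with $x\in Z^*(R)$, two distinct vertices $[x],[y]$ being adjacent iff $xy=0$. An associated prime $\operatorname{ann}(y)$ is identified with the vertex $[y]$. A leaf is a vertex of degree $1$. *)

theory Defs
  imports "HOL-Algebra.Ring_Divisibility" "HOL-Algebra.Ideal"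
begin

definition ann :: "('a, 'b) ring_scheme \<Rightarrow> 'a \<Rightarrow> 'a set" where
  "ann R x = {a \<in> carrier R. a \<otimes>\<^bsub>R\<^esub> x = \<zero>\<^bsub>R\<^esub>}"

definition zdiv_star :: "('a, 'b) ring_scheme \<Rightarrow> 'a set" where
  "zdiv_star R = {x \<in> carrier R. x \<noteq> \<zero>\<^bsub>R\<^esub> \<and>
      (\<exists>z \<in> carrier R. z \<noteq> \<zero>\<^bsub>R\<^esub> \<and> x \<otimes>\<^bsub>R\<^esub> z = \<zero>\<^bsub>R\<^esub>)}"

definition eclass :: "('a, 'b) ring_scheme \<Rightarrow> 'a \<Rightarrow> 'a set" where
  "eclass R x = {z \<in> carrier R. ann R z = ann R x}"

definition GE_vertices :: "('a, 'b) ring_scheme \<Rightarrow> 'a set set" where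
  "GE_vertices R = eclass R ` zdiv_star R"

definition GE_adj :: "('a, 'b) ring_scheme \<Rightarrow> 'a set \<Rightarrow> 'a set \<Rightarrow> bool" where
  "GE_adj R A B \<longleftrightarrow> A \<in> GE_vertices R \<and> B \<in> GE_vertices R \<and> A \<noteq> B \<and>
      (\<exists>x \<in> A. \<exists>y \<in> B. x \<otimes>\<^bsub>R\<^esub> y = \<zero>\<^bsub>R\<^esub>)"

text \<open>Degree of a vertex (card of the neighbourhood; 0 if infinite, so degree 1 means exactly one neighbour).\<close>
definition GE_degree :: "('a, 'b) ring_scheme \<Rightarrow> 'a set \<Rightarrow> nat" where
  "GE_degree R A = card {B. GE_adj R A B}"

end

theory Submission
  imports Defs
begin

lemma ecl_eq:
  assumes "z \<in> carrier R" "x \<in> carrier R"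
  shows "eclass R z = eclass R x \<longleftrightarrow> ann R z = ann R x"
  using assms unfolding eclass_def by auto

lemma ecl_mem: "a \<in> eclass R y \<longleftrightarrow> a \<in> carrier R \<and> ann R a = ann R y"
  unfolding eclass_def by auto

theorem proposition3p2:
  fixes R :: "('a, 'b) ring_scheme" and y :: 'a
  assumes "cring R" and "noetherian_ring R"
    and "infinite (GE_vertices R) \<or> card (GE_vertices R) > 3"
    and "y \<in> carrier R" and "primeideal (ann R y) R"
  shows "GE_degree R (eclass R y) \<noteq> 1"
proof
  assume deg: "GE_degree R (eclass R y) = 1"
  interpret R: cring R by fact
  interpret P: primeideal "ann R y" R by fact
  have yc: "y \<in> carrier R" by fact
  have annI: "\<And>a b. a \<in> carrier R \<Longrightarrow> a \<otimes>\<^bsub>R\<^esub> b = \<zero>\<^bsub>R\<^esub> \<Longrightarrow> a \<in> ann R b"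
    unfolding ann_def by auto
  have annD: "\<And>a b. a \<in> ann R b \<Longrightarrow> a \<in> carrier R \<and> a \<otimes>\<^bsub>R\<^esub> b = \<zero>\<^bsub>R\<^esub>"
    unfolding ann_def by auto
  have y0: "y \<noteq> \<zero>\<^bsub>R\<^esub>"
  proof
    assume "y = \<zero>\<^bsub>R\<^esub>"
    hence "ann R y = carrier R" unfolding ann_def by auto
    thus False using P.I_notcarr by auto
  qed
  from deg obtain B where Bset: "{B. GE_adj R (eclass R y) B} = {B}"
    unfolding GE_degree_def by (meson card_1_singletonE)
  hence adj: "GE_adj R (eclass R y) B" by auto
  then obtain x where x: "x \<in> zdiv_star R" "B = eclass R x"
    unfolding GE_adj_def GE_vertices_def by auto
  have xc: "x \<in> carrier R" using x unfolding zdiv_star_def by auto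
  have neq: "ann R x \<noteq> ann R y" using adj x xc yc ecl_eq[of x R y] unfolding GE_adj_def by auto
  from adj x obtain a b where ab: "a \<in> eclass R y" "b \<in> eclass R x" "a \<otimes>\<^bsub>R\<^esub> b = \<zero>\<^bsub>R\<^esub>"
    unfolding GE_adj_def by auto
  have "b \<in> ann R a" using ab annI[of b a] ecl_mem R.m_comm
    by (metis (no_types, lifting))
  hence "b \<in> ann R y" using ab(1) ecl_mem by metis
  hence "y \<in> ann R b" using annD annI yc R.m_comm by metis
  hence yQ: "y \<in> ann R x" using ab(2) ecl_mem by metis
  have L1: "\<And>z. z \<in> carrier R \<Longrightarrow> z \<noteq> \<zero>\<^bsub>R\<^esub> \<Longrightarrow> z \<otimes>\<^bsub>R\<^esub> y = \<zero>\<^bsub>R\<^esub> \<Longrightarrow>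
              ann R z = ann R y \<or> ann R z = ann R x"
  proof -
    fix z assume zc: "z \<in> carrier R" and z0: "z \<noteq> \<zero>\<^bsub>R\<^esub>" and zy: "z \<otimes>\<^bsub>R\<^esub> y = \<zero>\<^bsub>R\<^esub>"
    show "ann R z = ann R y \<or> ann R z = ann R x"
    proof (cases "ann R z = ann R y")
      case False
      have zz: "z \<in> zdiv_star R" unfolding zdiv_star_def using zc z0 zy yc y0 by auto
      have yz: "y \<in> zdiv_star R" unfolding zdiv_star_def using zc z0 zy yc y0 R.m_comm by auto
      have "GE_adj R (eclass R y) (eclass R z)"
      proof -
        have "eclass R y \<in> GE_vertices R" "eclass R z \<in> GE_vertices R"
          unfolding GE_vertices_def using zz yz by auto
        moreover have "eclass R y \<noteq> eclass R z" using False ecl_eq[OF zc yc] by auto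
        moreover have "y \<in> eclass R y" "z \<in> eclass R z" using yc zc by (auto simp: ecl_mem)
        moreover have "y \<otimes>\<^bsub>R\<^esub> z = \<zero>\<^bsub>R\<^esub>" using zy zc yc R.m_comm by metis
        ultimately show ?thesis unfolding GE_adj_def by blast
      qed
      hence "eclass R z = B" using Bset by auto
      thus ?thesis using x ecl_eq[OF zc xc] by auto
    qed simp
  qed
  have third: "\<And>w a. w \<in> carrier R \<Longrightarrow> w \<otimes>\<^bsub>R\<^esub> y \<noteq> \<zero>\<^bsub>R\<^esub> \<Longrightarrow> a \<in> carrier R \<Longrightarrow>
       a \<noteq> \<zero>\<^bsub>R\<^esub> \<Longrightarrow> a \<otimes>\<^bsub>R\<^esub> w = \<zero>\<^bsub>R\<^esub> \<Longrightarrow> ann R a = ann R x"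
  proof -
    fix w a assume wc: "w \<in> carrier R" and wy: "w \<otimes>\<^bsub>R\<^esub> y \<noteq> \<zero>\<^bsub>R\<^esub>" and ac: "a \<in> carrier R"
      and a0: "a \<noteq> \<zero>\<^bsub>R\<^esub>" and aw: "a \<otimes>\<^bsub>R\<^esub> w = \<zero>\<^bsub>R\<^esub>"
    have "a \<otimes>\<^bsub>R\<^esub> w \<in> ann R y" using aw yc annI[of "\<zero>\<^bsub>R\<^esub>" y] by simp
    hence "a \<in> ann R y \<or> w \<in> ann R y" using P.I_prime ac wc by auto
    moreover have "w \<notin> ann R y" using wy annD by auto
    ultimately have ay: "a \<otimes>\<^bsub>R\<^esub> y = \<zero>\<^bsub>R\<^esub>" using annD by auto
    have "w \<in> ann R a" using annI wc aw ac R.m_comm by metis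
    hence "ann R a \<noteq> ann R y" using \<open>w \<notin> ann R y\<close> by auto
    thus "ann R a = ann R x" using L1[OF ac a0 ay] by auto
  qed
  have uniq: "\<And>w w'. w \<in> zdiv_star R \<Longrightarrow> w' \<in> zdiv_star R \<Longrightarrow> ann R w \<noteq> ann R y \<Longrightarrow>
       ann R w \<noteq> ann R x \<Longrightarrow> ann R w' \<noteq> ann R y \<Longrightarrow> ann R w' \<noteq> ann R x \<Longrightarrow> ann R w \<subseteq> ann R w'"
  proof
    fix w w' t assume w: "w \<in> zdiv_star R" and w': "w' \<in> zdiv_star R"
      and n1: "ann R w \<noteq> ann R y" "ann R w \<noteq> ann R x"
      and n2: "ann R w' \<noteq> ann R y" "ann R w' \<noteq> ann R x" and t: "t \<in> ann R w"
    have wc: "w \<in> carrier R" and w'c: "w' \<in> carrier R" using w w' unfolding zdiv_star_def by auto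
    have wy: "w \<otimes>\<^bsub>R\<^esub> y \<noteq> \<zero>\<^bsub>R\<^esub>"
    proof
      assume "w \<otimes>\<^bsub>R\<^esub> y = \<zero>\<^bsub>R\<^esub>"
      thus False using L1[OF wc] n1 w unfolding zdiv_star_def by auto
    qed
    have w'y: "w' \<otimes>\<^bsub>R\<^esub> y \<noteq> \<zero>\<^bsub>R\<^esub>"
    proof
      assume "w' \<otimes>\<^bsub>R\<^esub> y = \<zero>\<^bsub>R\<^esub>"
      thus False using L1[OF w'c] n2 w' unfolding zdiv_star_def by auto
    qed
    obtain c where c: "c \<in> carrier R" "c \<noteq> \<zero>\<^bsub>R\<^esub>" "w' \<otimes>\<^bsub>R\<^esub> c = \<zero>\<^bsub>R\<^esub>"
      using w' unfolding zdiv_star_def by auto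
    have "ann R c = ann R x" using third[OF w'c w'y c(1,2)] c R.m_comm w'c by metis
    moreover have "w' \<in> ann R c" using annI c w'c by auto
    ultimately have w'x: "w' \<in> ann R x" by auto
    have tc: "t \<in> carrier R" and tw: "t \<otimes>\<^bsub>R\<^esub> w = \<zero>\<^bsub>R\<^esub>" using annD t by auto
    show "t \<in> ann R w'"
    proof (cases "t = \<zero>\<^bsub>R\<^esub>")
      case True thus ?thesis using annI w'c by auto
    next
      case False
      have "ann R t = ann R x" using third[OF wc wy tc False tw] .
      hence "w' \<in> ann R t" using w'x by auto
      thus ?thesis using annI annD tc w'c R.m_comm by metis
    qed
  qed
  define S where "S = GE_vertices R - {eclass R x, eclass R y}"
  have Ssub: "\<And>V V'. V \<in> S \<Longrightarrow> V' \<in> S \<Longrightarrow> V = V'"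
  proof -
    fix V V' assume V: "V \<in> S" and V': "V' \<in> S"
    obtain w where w: "w \<in> zdiv_star R" "V = eclass R w" using V unfolding S_def GE_vertices_def by auto
    obtain w' where w': "w' \<in> zdiv_star R" "V' = eclass R w'" using V' unfolding S_def GE_vertices_def by auto
    have wc: "w \<in> carrier R" and w'c: "w' \<in> carrier R" using w w' unfolding zdiv_star_def by auto
    have n1: "ann R w \<noteq> ann R y" "ann R w \<noteq> ann R x"
      using V w ecl_eq[OF wc yc] ecl_eq[OF wc xc] unfolding S_def by auto
    have n2: "ann R w' \<noteq> ann R y" "ann R w' \<noteq> ann R x"
      using V' w' ecl_eq[OF w'c yc] ecl_eq[OF w'c xc] unfolding S_def by auto
    have "ann R w = ann R w'" using uniq[OF w(1) w'(1) n1 n2] uniq[OF w'(1) w(1) n2 n1] by auto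
    thus "V = V'" using w w' ecl_eq[OF wc w'c] by auto
  qed
  have "S = {} \<or> (\<exists>V. S = {V})" using Ssub by blast
  hence fS: "finite S" "card S \<le> 1" by auto
  have sub: "GE_vertices R \<subseteq> S \<union> {eclass R x, eclass R y}" unfolding S_def by auto
  have fin: "finite (GE_vertices R)" using fS by (meson finite_Un finite.intros finite_subset sub)
  have "card (GE_vertices R) \<le> card (S \<union> {eclass R x, eclass R y})"
    using card_mono[OF _ sub] fS by auto
  also have "\<dots> \<le> card S + card {eclass R x, eclass R y}" by (rule card_Un_le)
  also have "\<dots> \<le> 3" using fS card_insert_le_m1 by (simp add: card_insert_if)
  finally show False using assms(3) fin by auto
qed

end
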